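(* Let $r\ge3$, $n>r$. In $T$ define $\zeta(T_{\rho^{-1}})=(F_nF_{n-1}\cdots F_{r+1})(F_1F_2\cdots F_r)1_\omega$ and $\zeta(T_\rho)=(E_rE_{r+1}\cdots E_{n-1})(E_{r-1}E_{r-2}\cdots E_1)E_n1_\omega$. Then $\zeta(T_{\rho^{-1}})\zeta(T_\rho)=1_\omega$ and $\zeta(T_\rho)\zeta(T_{\rho^{-1}})=1_\omega$.
   Context: $T$ is the $\mathbb{Q}(v)$-algebra with generators $E_i,F_i,K_i^{\pm1}$ ($1\le i\le n$, indices mod $n$) and relations: $K_iK_j=K_jK_i$; $K_iK_i^{-1}=K_i^{-1}K_i=1$; $K_iE_j=v^{\epsilon^+(i,j)}E_jK_i$; $K_iF_j=v^{-\epsilon^+(i,j)}F_jK_i$ ($\epsilon^+(i,j)=1$ if $j=i$, $-1$ if $j\equiv i-1\pmod n$, $0$ otherwise); $E_iF_j-F_jE_i=\delta_{ij}\frac{K_iK_{i+1}^{-1}-K_i^{-1}K_{i+1}}{v-v^{-1}}$; $E_iE_j=E_jE_i$, $F_iF_j=F_jF_i$ if $i-j\not\equiv\pm1$; $E_i^2E_j-(v+v^{-1})E_iE_jE_i+E_jE_i^2=0$, $F_i^2F_j-(v+v^{-1})F_iF_jF_i+F_jF_i^2=0$ if $i-j\equiv\pm1\pmod n$; $K_1\cdots K_n=v^r$; $\prod_{j=0}^r(K_i-v^j)=0$. For a composition $\lambda$ of $r$ into $n$ nonnegative parts, $1_\lambda=\prod_{i=1}^n\prod_{s=1}^{\lambda_i}\frac{K_iv^{-s+1}-K_i^{-1}v^{s-1}}{v^s-v^{-s}}$;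 $\omega=(1,\dots,1,0,\dots,0)$ with $r$ ones and $n-r$ zeros. *)

theory Defs
  imports "HOL-Computational_Algebra.Polynomial" "HOL-Computational_Algebra.Fraction_Field"
begin

type_synonym qv = "rat poly fract"

definition vq :: qv where "vq = Fract [:0, 1:] 1"

definition sc :: "nat \<Rightarrow> nat \<Rightarrow> nat" where "sc n i = (if i = n then 1 else i + 1)"
definition pr :: "nat \<Rightarrow> nat \<Rightarrow> nat" where "pr n i = (if i = 1 then n else i - 1)"

definition adj :: "nat \<Rightarrow> nat \<Rightarrow> nat \<Rightarrow> bool" where
  "adj n i j \<longleftrightarrow> j = sc n i \<or> j = pr n i"

definition epsp :: "nat \<Rightarrow> nat \<Rightarrow> nat \<Rightarrow> int" where
  "epsp n i j = (if j = i then 1 else if j = pr n i then -1 else 0)"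

text \<open>A model of the defining relations of T: a unital associative Q(v)-algebra,
  given as a ring 'a with a central unital ring homomorphism emb from Q(v),
  together with elements E i, F i, K i, Ki i (= K i inverse), i in {1..n}.
  An identity holds in T iff it holds in every such model (T is the universal one).\<close>
definition T_rel :: "nat \<Rightarrow> nat \<Rightarrow> (qv \<Rightarrow> 'a::ring_1) \<Rightarrow> (nat \<Rightarrow> 'a) \<Rightarrow> (nat \<Rightarrow> 'a)
    \<Rightarrow> (nat \<Rightarrow> 'a) \<Rightarrow> (nat \<Rightarrow> 'a) \<Rightarrow> bool" where
  "T_rel n r emb E F K Ki \<longleftrightarrow>
     emb 0 = 0 \<and> emb 1 = 1 \<and> (\<forall>a b. emb (a + b) = emb a + emb b) \<and>
     (\<forall>a b. emb (a * b) = emb a * emb b) \<and> (\<forall>a x. emb a * x = x * emb a) \<and>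
     (\<forall>i\<in>{1..n}. \<forall>j\<in>{1..n}.
        K i * K j = K j * K i \<and>
        K i * E j = emb (vq powi epsp n i j) * E j * K i \<and>
        K i * F j = emb (vq powi (- epsp n i j)) * F j * K i \<and>
        E i * F j - F j * E i =
          (if i = j then emb (inverse (vq - inverse vq)) *
              (K i * Ki (sc n i) - Ki i * K (sc n i)) else 0) \<and>
        (\<not> adj n i j \<longrightarrow> E i * E j = E j * E i \<and> F i * F j = F j * F i) \<and>
        (adj n i j \<longrightarrow>
           E i * E i * E j - emb (vq + inverse vq) * E i * E j * E i + E j * E i * E i = 0 \<and>
           F i * F i * F j - emb (vq + inverse vq) * F i * F j * F i + F j * F i * F i = 0)) \<and>
     (\<forall>i\<in>{1..n}. K i * Ki i = 1 \<and> Ki i * K i = 1 \<and>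
        prod_list (map (\<lambda>j. K i - emb (vq ^ j)) [0..<r+1]) = 0) \<and>
     prod_list (map K [1..<n+1]) = emb (vq ^ r)"

definition one_lam :: "nat \<Rightarrow> (qv \<Rightarrow> 'a::ring_1) \<Rightarrow> (nat \<Rightarrow> 'a) \<Rightarrow> (nat \<Rightarrow> 'a)
    \<Rightarrow> (nat \<Rightarrow> nat) \<Rightarrow> 'a" where
  "one_lam n emb K Ki lam =
     prod_list (map (\<lambda>i. prod_list (map (\<lambda>s.
        emb (inverse (vq ^ s - inverse (vq ^ s))) *
        (emb (vq powi (- int s + 1)) * K i - emb (vq powi (int s - 1)) * Ki i))
       [1..<lam i + 1])) [1..<n+1])"

definition omega :: "nat \<Rightarrow> nat \<Rightarrow> nat" where
  "omega r i = (if 1 \<le> i \<and> i \<le> r then 1 else 0)"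

definition zeta_rho_inv :: "nat \<Rightarrow> nat \<Rightarrow> (qv \<Rightarrow> 'a::ring_1) \<Rightarrow> (nat \<Rightarrow> 'a)
    \<Rightarrow> (nat \<Rightarrow> 'a) \<Rightarrow> (nat \<Rightarrow> 'a) \<Rightarrow> 'a" where
  "zeta_rho_inv n r emb F K Ki =
     prod_list (map F (rev [r+1..<n+1])) * prod_list (map F [1..<r+1])
       * one_lam n emb K Ki (omega r)"

definition zeta_rho :: "nat \<Rightarrow> nat \<Rightarrow> (qv \<Rightarrow> 'a::ring_1) \<Rightarrow> (nat \<Rightarrow> 'a)
    \<Rightarrow> (nat \<Rightarrow> 'a) \<Rightarrow> (nat \<Rightarrow> 'a) \<Rightarrow> 'a" where
  "zeta_rho n r emb E K Ki =
     prod_list (map E [r..<n]) * prod_list (map E (rev [1..<r])) * E n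
       * one_lam n emb K Ki (omega r)"

end

theory Submission
  imports Defs
begin


lemma vq_pow: "vq ^ k = Fract ([:0,1:] ^ k) 1"
  by (induct k) (simp_all add: vq_def One_fract_def)

lemma vq_nz: "vq \<noteq> 0"
  by (simp add: vq_def Zero_fract_def eq_fract)

lemma vq_pow_eq1: "vq ^ k = 1 \<Longrightarrow> k = 0"
proof -
  assume "vq ^ k = 1"
  hence "([:0,1:] :: rat poly) ^ k = 1" by (simp add: vq_pow One_fract_def eq_fract)
  hence "degree (([:0,1:] :: rat poly) ^ k) = 0" by simp
  thus "k = 0" by (simp add: degree_power_eq)
qed

lemma vq_powi_eq1: "vq powi k = 1 \<Longrightarrow> k = 0"
proof (cases "k \<ge> 0")
  case True
  assume h: "vq powi k = 1"
  then have "vq ^ nat k = 1" using True by (simp add: power_int_nonneg_exp)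
  then show ?thesis using True vq_pow_eq1 by fastforce
next
  case False
  assume h: "vq powi k = 1"
  have "vq powi k = inverse (vq powi (-k))" by (simp add: power_int_minus[of vq "-k", simplified])
  also have "vq powi (-k) = vq ^ nat (-k)" using False by (simp add: power_int_nonneg_exp)
  finally have "vq ^ nat (-k) = 1" using h by (metis inverse_1 inverse_inverse_eq)
  then show ?thesis using False vq_pow_eq1 by fastforce
qed

lemma vq_powi_inj: "vq powi a = vq powi b \<Longrightarrow> a = b"
proof -
  assume "vq powi a = vq powi b"
  hence "vq powi (a - b) = 1" using vq_nz by (simp add: power_int_diff)
  thus "a = b" using vq_powi_eq1 by fastforce
qed

lemma vq_pow_inj: "vq ^ a = vq ^ b \<Longrightarrow> a = b"
  using vq_powi_inj[of "int a" "int b"] by simp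

lemma vq_inv_ne: "vq - inverse vq \<noteq> 0"
proof
  assume "vq - inverse vq = 0"
  hence "vq * vq = 1" using vq_nz by (simp add: field_simps)
  hence "vq ^ 2 = vq ^ 0" by (simp add: power2_eq_square)
  thus False using vq_pow_inj by fastforce
qed



locale TT =
  fixes n r :: nat and emb :: "qv \<Rightarrow> 'a::ring_1" and E F K Ki :: "nat \<Rightarrow> 'a"
  assumes r3: "r \<ge> 3" and nr: "r < n" and rel: "T_rel n r emb E F K Ki"
begin

lemma emb0[simp]: "emb 0 = 0" and emb1[simp]: "emb 1 = 1"
  and emb_add: "emb (a + b) = emb a + emb b"
  and emb_mult: "emb (a * b) = emb a * emb b"
  and emb_comm: "emb a * x = x * emb a"
  using rel unfolding T_rel_def by (elim conjE; blast)+

lemma emb_diff: "emb (a - b) = emb a - emb b"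
  by (metis add_diff_cancel emb_add eq_diff_eq)

lemma emb_minus: "emb (- a) = - emb a"
  using emb_diff[of 0 a] by simp

lemma emb_inv: "a \<noteq> 0 \<Longrightarrow> emb (inverse a) * emb a = 1"
  by (simp flip: emb_mult)

lemma emb_cancel: "a \<noteq> 0 \<Longrightarrow> emb a * x = 0 \<Longrightarrow> x = 0"
  by (metis emb_inv mult.assoc mult_1 mult_zero_right)

lemma emb_mult_assoc: "emb a * (emb b * x) = emb (a * b) * x"
  by (simp add: emb_mult mult.assoc)

lemma emb_commx: "x * (emb a * y) = emb a * (x * y)"
  by (metis emb_comm mult.assoc)

lemma KK: "i \<in> {1..n} \<Longrightarrow> j \<in> {1..n} \<Longrightarrow> K i * K j = K j * K i"
  and KE: "i \<in> {1..n} \<Longrightarrow> j \<in> {1..n} \<Longrightarrow> K i * E j = emb (vq powi epsp n i j) * E j * K i"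
  and KF: "i \<in> {1..n} \<Longrightarrow> j \<in> {1..n} \<Longrightarrow> K i * F j = emb (vq powi (- epsp n i j)) * F j * K i"
  and EF: "i \<in> {1..n} \<Longrightarrow> j \<in> {1..n} \<Longrightarrow> E i * F j - F j * E i =
          (if i = j then emb (inverse (vq - inverse vq)) *
              (K i * Ki (sc n i) - Ki i * K (sc n i)) else 0)"
  and KKi: "i \<in> {1..n} \<Longrightarrow> K i * Ki i = 1"
  and KiK: "i \<in> {1..n} \<Longrightarrow> Ki i * K i = 1"
  and Kpoly: "i \<in> {1..n} \<Longrightarrow> prod_list (map (\<lambda>j. K i - emb (vq ^ j)) [0..<r+1]) = 0"
  and Kprod: "prod_list (map K [1..<n+1]) = emb (vq ^ r)"
  using rel unfolding T_rel_def by (elim conjE; blast)+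

lemma EF_comm: "i \<in> {1..n} \<Longrightarrow> j \<in> {1..n} \<Longrightarrow> i \<noteq> j \<Longrightarrow> E i * F j = F j * E i"
  using EF by fastforce

lemma KiKc: assumes "i \<in> {1..n}" "j \<in> {1..n}" shows "Ki i * K j = K j * Ki i"
proof -
  have "Ki i * K j = Ki i * K j * (K i * Ki i)" using KKi[OF assms(1)] by simp
  also have "\<dots> = Ki i * (K i * K j) * Ki i" using KK[OF assms] by (simp add: mult.assoc)
  also have "\<dots> = K j * Ki i" using KiK[OF assms(1)] by (simp flip: mult.assoc)
  finally show ?thesis .
qed

lemma n2: "n \<ge> 2" using r3 nr by simp

lemma sc_in: "i \<in> {1..n} \<Longrightarrow> sc n i \<in> {1..n}"
  using n2 by (auto simp: sc_def)

lemma epsp_ii: "epsp n i i = 1" by (simp add: epsp_def)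
lemma epsp_sc: "i \<in> {1..n} \<Longrightarrow> epsp n (sc n i) i = -1"
  using n2 by (auto simp: epsp_def sc_def pr_def)

definition wt :: "(nat \<Rightarrow> int) \<Rightarrow> 'a \<Rightarrow> bool" where
  "wt \<mu> z \<longleftrightarrow> (\<forall>i\<in>{1..n}. K i * z = emb (vq powi \<mu> i) * z)"

lemma wt_Ki: assumes "wt \<mu> z" "i \<in> {1..n}" shows "Ki i * z = emb (vq powi (- \<mu> i)) * z"
proof -
  have k: "K i * z = emb (vq powi \<mu> i) * z" using assms unfolding wt_def by auto
  have "z = Ki i * (K i * z)" using KiK[OF assms(2)] by (simp flip: mult.assoc)
  also have "\<dots> = emb (vq powi \<mu> i) * (Ki i * z)" using k by (metis emb_commx)
  finally have "emb (vq powi (- \<mu> i)) * z = emb (vq powi (- \<mu> i)) * (emb (vq powi \<mu> i) * (Ki i * z))"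
    by simp
  also have "\<dots> = Ki i * z" using vq_nz by (simp add: emb_mult_assoc power_int_minus)
  finally show ?thesis by simp
qed

lemma wt_E: assumes "wt \<mu> z" "j \<in> {1..n}" shows "wt (\<lambda>i. \<mu> i + epsp n i j) (E j * z)"
  unfolding wt_def
proof
  fix i assume i: "i \<in> {1..n}"
  have "K i * (E j * z) = emb (vq powi epsp n i j) * E j * (K i * z)"
    using KE[OF i assms(2)] by (simp flip: mult.assoc)
  also have "\<dots> = emb (vq powi epsp n i j) * (E j * (emb (vq powi \<mu> i) * z))"
    using assms i unfolding wt_def by (simp add: mult.assoc)
  also have "\<dots> = emb (vq powi (\<mu> i + epsp n i j)) * (E j * z)"
    using vq_nz by (simp only: emb_commx[of "E j"] emb_mult_assoc) (simp add: power_int_add mult.commute)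
  finally show "K i * (E j * z) = emb (vq powi (\<mu> i + epsp n i j)) * (E j * z)" .
qed

lemma wt_F: assumes "wt \<mu> z" "j \<in> {1..n}" shows "wt (\<lambda>i. \<mu> i - epsp n i j) (F j * z)"
  unfolding wt_def
proof
  fix i assume i: "i \<in> {1..n}"
  have "K i * (F j * z) = emb (vq powi (- epsp n i j)) * F j * (K i * z)"
    using KF[OF i assms(2)] by (simp flip: mult.assoc)
  also have "\<dots> = emb (vq powi (- epsp n i j)) * (F j * (emb (vq powi \<mu> i) * z))"
    using assms i unfolding wt_def by (simp add: mult.assoc)
  also have "\<dots> = emb (vq powi (\<mu> i - epsp n i j)) * (F j * z)"
    using vq_nz power_int_add[of vq "\<mu> i" "- epsp n i j"]
    by (simp only: emb_commx[of "F j"] emb_mult_assoc) (simp add: mult.commute)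
  finally show "K i * (F j * z) = emb (vq powi (\<mu> i - epsp n i j)) * (F j * z)" .
qed

lemma wt_cong: "wt \<mu> z \<Longrightarrow> (\<And>i. i \<in> {1..n} \<Longrightarrow> \<mu> i = \<nu> i) \<Longrightarrow> wt \<nu> z"
  unfolding wt_def by auto

lemma wt_Es: "wt \<mu> z \<Longrightarrow> set xs \<subseteq> {1..n} \<Longrightarrow>
   wt (\<lambda>i. \<mu> i + sum_list (map (epsp n i) xs)) (prod_list (map E xs) * z)"
proof (induction xs)
  case Nil then show ?case by simp
next
  case (Cons j xs)
  then have "wt (\<lambda>i. \<mu> i + sum_list (map (epsp n i) xs) + epsp n i j) (E j * (prod_list (map E xs) * z))"
    using wt_E by simp
  then show ?case by (simp add: mult.assoc add_ac)
qed

lemma wt_Fs: "wt \<mu> z \<Longrightarrow> set xs \<subseteq> {1..n} \<Longrightarrow>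
   wt (\<lambda>i. \<mu> i - sum_list (map (epsp n i) xs)) (prod_list (map F xs) * z)"
proof (induction xs)
  case Nil then show ?case by simp
next
  case (Cons j xs)
  then have "wt (\<lambda>i. \<mu> i - sum_list (map (epsp n i) xs) - epsp n i j) (F j * (prod_list (map F xs) * z))"
    using wt_F by simp
  then show ?case by (simp add: mult.assoc algebra_simps)
qed

lemma prod_eig: "(\<And>a. a \<in> set xs \<Longrightarrow> f a * z = emb (g a) * z) \<Longrightarrow>
    prod_list (map f xs) * z = emb (prod_list (map g xs)) * z"
proof (induction xs)
  case Nil then show ?case by simp
next
  case (Cons a xs)
  have "prod_list (map f (a # xs)) * z = f a * (emb (prod_list (map g xs)) * z)"
    using Cons by (simp add: mult.assoc)
  also have "\<dots> = emb (prod_list (map g xs)) * (f a * z)" by (rule emb_commx)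
  also have "\<dots> = emb (prod_list (map g (a # xs))) * z"
    using Cons by (simp add: emb_mult_assoc mult.commute)
  finally show ?case .
qed

lemma wt_neg: assumes "wt \<mu> z" "i \<in> {1..n}" "\<mu> i < 0" shows "z = 0"
proof -
  have "prod_list (map (\<lambda>j. K i - emb (vq ^ j)) [0..<r+1]) * z
        = emb (prod_list (map (\<lambda>j. vq powi \<mu> i - vq ^ j) [0..<r+1])) * z"
    by (rule prod_eig) (use assms in \<open>auto simp: wt_def left_diff_distrib emb_diff\<close>)
  moreover have "prod_list (map (\<lambda>j. vq powi \<mu> i - vq ^ j) [0..<r+1]) \<noteq> 0"
  proof
    assume "prod_list (map (\<lambda>j. vq powi \<mu> i - vq ^ j) [0..<r+1]) = 0"
    then obtain j where "vq powi \<mu> i = vq powi (int j)" by (auto simp: prod_list_zero_iff)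
    then show False using vq_powi_inj assms(3) by fastforce
  qed
  ultimately show ?thesis using Kpoly[OF assms(2)] emb_cancel by (metis mult_zero_left)
qed

end

context TT begin

lemma wt_K: "wt \<mu> z \<Longrightarrow> i \<in> {1..n} \<Longrightarrow> K i * z = emb (vq powi \<mu> i) * z"
  unfolding wt_def by auto

lemma cartan_act:
  assumes "wt \<mu> z" "i \<in> {1..n}"
  shows "(E i * F i - F i * E i) * z =
    emb (inverse (vq - inverse vq) * (vq powi (\<mu> i - \<mu> (sc n i)) - vq powi (\<mu> (sc n i) - \<mu> i))) * z"
proof -
  have s: "sc n i \<in> {1..n}" using sc_in assms(2) .
  have "(E i * F i - F i * E i) * z = emb (inverse (vq - inverse vq)) *
              (K i * (Ki (sc n i) * z) - Ki i * (K (sc n i) * z))"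
    using EF[OF assms(2) assms(2)] by (simp add: mult.assoc left_diff_distrib)
  also have "K i * (Ki (sc n i) * z) = emb (vq powi (- \<mu> (sc n i))) * (K i * z)"
    using wt_Ki[OF assms(1) s] by (simp add: emb_commx)
  also have "\<dots> = emb (vq powi (\<mu> i - \<mu> (sc n i))) * z"
    using wt_K[OF assms] vq_nz by (simp add: emb_mult_assoc power_int_diff power_int_minus field_simps)
  also have "Ki i * (K (sc n i) * z) = emb (vq powi \<mu> (sc n i)) * (Ki i * z)"
    using wt_K[OF assms(1) s] by (simp add: emb_commx)
  also have "\<dots> = emb (vq powi (\<mu> (sc n i) - \<mu> i)) * z"
    using wt_Ki[OF assms] vq_nz by (simp add: emb_mult_assoc power_int_diff power_int_minus field_simps)
  finally show ?thesis
    by (simp add: emb_mult_assoc right_diff_distrib left_diff_distrib emb_diff mult.assoc flip: emb_mult)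
qed

lemma FE:
  assumes "wt \<mu> z" "i \<in> {1..n}" "\<mu> i = 0" "\<mu> (sc n i) = 1"
  shows "F i * (E i * z) = z"
proof -
  have "wt (\<lambda>l. \<mu> l - epsp n l i) (F i * z)" using wt_F assms by blast
  hence Fz: "F i * z = 0" using wt_neg[of _ "F i * z" i] assms by (simp add: epsp_ii)
  have c: "inverse (vq - inverse vq) * (vq powi (-1) - vq powi 1) = -1"
    using vq_inv_ne by (simp add: power_int_minus field_simps)
  have "F i * (E i * z) = E i * (F i * z) - (E i * F i - F i * E i) * z"
    by (simp add: mult.assoc left_diff_distrib)
  also have "\<dots> = z" using cartan_act[OF assms(1,2)] assms(3,4) Fz c by (simp add: emb_minus)
  finally show ?thesis .
qed

lemma EFl:
  assumes "wt \<mu> z" "i \<in> {1..n}" "\<mu> i = 1" "\<mu> (sc n i) = 0"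
  shows "E i * (F i * z) = z"
proof -
  have "wt (\<lambda>l. \<mu> l + epsp n l i) (E i * z)" using wt_E assms by blast
  hence Ez: "E i * z = 0" using wt_neg[of _ "E i * z" "sc n i"] assms sc_in epsp_sc by simp
  have c: "inverse (vq - inverse vq) * (vq powi 1 - vq powi (-1)) = 1"
    using vq_inv_ne by (simp add: power_int_minus field_simps)
  have "E i * (F i * z) = F i * (E i * z) + (E i * F i - F i * E i) * z"
    by (simp add: mult.assoc left_diff_distrib)
  also have "\<dots> = z" using cartan_act[OF assms(1,2)] assms(3,4) Ez c by simp
  finally show ?thesis .
qed

end


lemma sum_omega: "sum (omega r) {1..N} = min r N"
  by (induction N) (auto simp: omega_def)

lemma prod_vq_pow: "prod_list (map (\<lambda>i. vq ^ m i) xs) = vq ^ sum_list (map m xs)"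
  by (induction xs) (simp_all add: power_add)

lemma prod_list_all1: "(\<forall>x\<in>set xs. f x = 1) \<Longrightarrow> prod_list (map f xs) = 1"
  by (induction xs) auto

context TT begin

definition e where "e = one_lam n emb K Ki (omega r)"

definition kc :: "'a \<Rightarrow> bool" where "kc w \<longleftrightarrow> (\<forall>i\<in>{1..n}. K i * w = w * K i)"

lemma kc_K: "l \<in> {1..n} \<Longrightarrow> kc (K l)" unfolding kc_def using KK by auto
lemma kc_Ki: "l \<in> {1..n} \<Longrightarrow> kc (Ki l)" unfolding kc_def using KiKc by auto
lemma kc_emb: "kc (emb c)" unfolding kc_def using emb_comm by auto
lemma kc_mult: "kc a \<Longrightarrow> kc b \<Longrightarrow> kc (a * b)" unfolding kc_def by (metis mult.assoc)
lemma kc_diff: "kc a \<Longrightarrow> kc b \<Longrightarrow> kc (a - b)" unfolding kc_def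
  by (simp add: left_diff_distrib right_diff_distrib)
lemma kc_prod: "(\<And>x. x \<in> set xs \<Longrightarrow> kc (f x)) \<Longrightarrow> kc (prod_list (map f xs))"
  by (induction xs) (auto simp: kc_mult, simp add: kc_def)

lemma kc_e: "kc e"
  unfolding e_def one_lam_def
  by (intro kc_prod kc_mult kc_diff kc_emb kc_K kc_Ki) auto

definition gam :: "(nat \<Rightarrow> int) \<Rightarrow> qv" where
  "gam \<mu> = prod_list (map (\<lambda>i. prod_list (map (\<lambda>s.
        inverse (vq ^ s - inverse (vq ^ s)) *
        (vq powi (- int s + 1) * vq powi \<mu> i - vq powi (int s - 1) * vq powi (- \<mu> i)))
       [1..<omega r i + 1])) [1..<n+1])"

lemma e_eig: assumes "wt \<mu> y" shows "e * y = emb (gam \<mu>) * y"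
  unfolding e_def one_lam_def gam_def
proof (rule prod_eig)
  fix i assume "i \<in> set [1..<n+1]"
  hence i: "i \<in> {1..n}" by auto
  show "prod_list (map (\<lambda>s. emb (inverse (vq ^ s - inverse (vq ^ s))) *
             (emb (vq powi (- int s + 1)) * K i - emb (vq powi (int s - 1)) * Ki i))
          [1..<omega r i + 1]) * y =
        emb (prod_list (map (\<lambda>s. inverse (vq ^ s - inverse (vq ^ s)) *
              (vq powi (- int s + 1) * vq powi \<mu> i - vq powi (int s - 1) * vq powi (- \<mu> i)))
             [1..<omega r i + 1])) * y"
  proof (rule prod_eig)
    fix s
    let ?A = "inverse (vq ^ s - inverse (vq ^ s))"
    let ?B = "vq powi (- int s + 1)" let ?C = "vq powi (int s - 1)"
    have "emb ?A * (emb ?B * K i - emb ?C * Ki i) * y = emb ?A * (emb ?B * (K i * y) - emb ?C * (Ki i * y))"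
      by (simp add: mult.assoc left_diff_distrib)
    also have "\<dots> = emb ?A * (emb (?B * vq powi \<mu> i) * y - emb (?C * vq powi (- \<mu> i)) * y)"
      using wt_K[OF assms i] wt_Ki[OF assms i] by (simp add: emb_mult_assoc)
    also have "\<dots> = emb (?A * (?B * vq powi \<mu> i - ?C * vq powi (- \<mu> i))) * y"
      by (simp only: left_diff_distrib[symmetric] emb_diff[symmetric] emb_mult_assoc)
    finally show "emb ?A * (emb ?B * K i - emb ?C * Ki i) * y = emb (?A * (?B * vq powi \<mu> i - ?C * vq powi (- \<mu> i))) * y" .
  qed
qed

lemma gam_omega: "gam (\<lambda>i. int (omega r i)) = 1"
proof -
  have "\<forall>i \<in> set [1..<n+1]. prod_list (map (\<lambda>s.
        inverse (vq ^ s - inverse (vq ^ s)) *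
        (vq powi (- int s + 1) * vq powi (int (omega r i)) - vq powi (int s - 1) * vq powi (- int (omega r i))))
       [1..<omega r i + 1]) = 1"
    using vq_inv_ne by (auto simp: omega_def power_int_minus)
  then show ?thesis unfolding gam_def by (rule prod_list_all1)
qed

end

context TT begin

definition Gl :: "nat \<Rightarrow> 'a \<Rightarrow> bool" where
  "Gl j y \<longleftrightarrow> K j * (e * y) = emb (vq ^ omega r j) * (e * y)"

lemma Gl_0: "Gl j 0" by (simp add: Gl_def)

lemma Gl_diff: "Gl j a \<Longrightarrow> Gl j b \<Longrightarrow> Gl j (a - b)"
  by (simp add: Gl_def right_diff_distrib)

lemma Gl_add: "Gl j a \<Longrightarrow> Gl j b \<Longrightarrow> Gl j (a + b)"
  by (simp add: Gl_def distrib_left)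

lemma Gl_emb: assumes "Gl j y" shows "Gl j (emb c * y)"
proof -
  have "K j * (e * (emb c * y)) = emb c * (K j * (e * y))" by (simp add: emb_commx)
  also have "\<dots> = emb c * (emb (vq ^ omega r j) * (e * y))" using assms by (simp add: Gl_def)
  also have "\<dots> = emb (vq ^ omega r j) * (e * (emb c * y))"
    by (simp add: emb_mult_assoc mult.commute emb_commx[of e])
  finally show ?thesis by (simp add: Gl_def)
qed

lemma e_K: "i \<in> {1..n} \<Longrightarrow> e * (K i * y) = K i * (e * y)"
proof -
  assume i: "i \<in> {1..n}"
  have ke: "K i * e = e * K i" using kc_e i unfolding kc_def by blast
  show ?thesis by (simp only: mult.assoc[symmetric] ke)
qed

lemma Gl_K: assumes "Gl j y" "i \<in> {1..n}" "j \<in> {1..n}" shows "Gl j (K i * y)"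
proof -
  have kk: "K j * K i = K i * K j" using KK[OF assms(3,2)] .
  have "K j * (e * (K i * y)) = K j * (K i * (e * y))" by (simp only: e_K[OF assms(2)])
  also have "\<dots> = K i * (K j * (e * y))" by (simp only: mult.assoc[symmetric] kk)
  also have "\<dots> = K i * (emb (vq ^ omega r j) * (e * y))" using assms(1) by (simp only: Gl_def)
  also have "\<dots> = emb (vq ^ omega r j) * (e * (K i * y))"
    by (simp only: e_K[OF assms(2)] emb_commx)
  finally show ?thesis by (simp only: Gl_def)
qed

abbreviation Pi :: "nat \<Rightarrow> nat list \<Rightarrow> 'a" where
  "Pi i S \<equiv> prod_list (map (\<lambda>b. K i - emb (vq ^ b)) S)"

lemma Gl_Ksub: "Gl j y \<Longrightarrow> i \<in> {1..n} \<Longrightarrow> j \<in> {1..n} \<Longrightarrow> Gl j ((K i - emb c) * y)"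
  unfolding left_diff_distrib by (intro Gl_diff Gl_K Gl_emb)

lemma Gl_Pi: "Gl j y \<Longrightarrow> i \<in> {1..n} \<Longrightarrow> j \<in> {1..n} \<Longrightarrow> Gl j (Pi i S * y)"
proof (induction S)
  case Nil then show ?case by simp
next
  case (Cons a S)
  then have "Gl j ((K i - emb (vq ^ a)) * (Pi i S * y))" by (intro Gl_Ksub)
  then show ?case by (simp only: list.map prod_list.Cons mult.assoc)
qed

lemma Pi_K: "i \<in> {1..n} \<Longrightarrow> Pi i S * (K i * x) = K i * (Pi i S * x)"
proof -
  assume i: "i \<in> {1..n}"
  have "kc (Pi i S)"
  proof (rule kc_prod)
    fix b show "kc (K i - emb (vq ^ b))" using kc_diff kc_K[OF i] kc_emb by blast
  qed
  then have pk: "K i * Pi i S = Pi i S * K i" using i unfolding kc_def by blast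
  show ?thesis by (simp only: mult.assoc[symmetric] pk)
qed

lemma Pi_emb: "Pi i S * (emb c * x) = emb c * (Pi i S * x)"
  by (rule emb_commx)

lemma W: assumes "Gl j ((K i - emb (vq ^ a)) * x)" "i \<in> {1..n}" "j \<in> {1..n}"
  shows "Gl j ((Pi i S - emb (prod_list (map (\<lambda>b. vq ^ a - vq ^ b) S))) * x)"
proof (induction S)
  case Nil then show ?case by (simp add: Gl_0)
next
  case (Cons b S)
  let ?q = "prod_list (map (\<lambda>b. vq ^ a - vq ^ b) S)"
  have eq: "(Pi i (b # S) - emb (prod_list (map (\<lambda>b. vq ^ a - vq ^ b) (b # S)))) * x
      = Pi i S * ((K i - emb (vq ^ a)) * x) + emb (vq ^ a - vq ^ b) * ((Pi i S - emb ?q) * x)"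
  proof -
    let ?P = "Pi i S" and ?va = "vq ^ a" and ?vb = "vq ^ b"
    have 1: "(Pi i (b # S) - emb (prod_list (map (\<lambda>b. vq ^ a - vq ^ b) (b # S)))) * x
       = K i * (?P * x) - emb ?vb * (?P * x) - emb (?va - ?vb) * (emb ?q * x)"
      by (simp add: left_diff_distrib mult.assoc emb_mult_assoc)
    have 2: "Pi i S * ((K i - emb (vq ^ a)) * x) + emb (vq ^ a - vq ^ b) * ((Pi i S - emb ?q) * x)
       = K i * (?P * x) - emb ?va * (?P * x) + emb (?va - ?vb) * (?P * x) - emb (?va - ?vb) * (emb ?q * x)"
      by (simp add: right_diff_distrib left_diff_distrib mult.assoc Pi_K[OF assms(2)] Pi_emb)
    show ?thesis unfolding 1 2 by (simp add: emb_diff left_diff_distrib)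
  qed
  have "Gl j (Pi i S * ((K i - emb (vq ^ a)) * x))" by (rule Gl_Pi[OF assms(1,2,3)])
  moreover have "Gl j (emb (vq ^ a - vq ^ b) * ((Pi i S - emb ?q) * x))" by (rule Gl_emb[OF Cons.IH])
  ultimately show ?case unfolding eq by (rule Gl_add)
qed

lemma inner:
  assumes i: "i \<in> {1..n}" and j: "j \<in> {1..n}"
    and cl: "\<And>y c. P y \<Longrightarrow> P (K i * y - emb c * y)"
    and IH: "\<And>y a. P y \<Longrightarrow> K i * y = emb (vq ^ a) * y \<Longrightarrow> Gl j y"
  shows "distinct S \<Longrightarrow> P x \<Longrightarrow> Pi i S * x = 0 \<Longrightarrow> Gl j x"
proof (induction S arbitrary: x)
  case Nil then show ?case by (simp add: Gl_0)
next
  case (Cons a S)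
  have PPi: "P (Pi i T * x)" for T
  proof (induction T)
    case Nil then show ?case using Cons.prems by simp
  next
    case (Cons b T)
    have "P (K i * (Pi i T * x) - emb (vq ^ b) * (Pi i T * x))" by (rule cl[OF Cons.IH])
    then show ?case by (simp add: left_diff_distrib mult.assoc)
  qed
  define y where "y = K i * x - emb (vq ^ a) * x"
  have Py: "P y" unfolding y_def using cl Cons.prems by blast
  have "Pi i S * y = (K i - emb (vq ^ a)) * (Pi i S * x)"
    unfolding y_def using Pi_K[OF i] Pi_emb by (simp add: right_diff_distrib left_diff_distrib)
  also have "\<dots> = 0" using Cons.prems by (simp add: mult.assoc)
  finally have Gy: "Gl j y" using Cons.IH[OF _ Py] Cons.prems(1) by simp
  define z where "z = Pi i S * x"
  have "(K i - emb (vq ^ a)) * z = 0" using Cons.prems by (simp add: z_def mult.assoc)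
  hence "K i * z = emb (vq ^ a) * z" by (simp add: left_diff_distrib)
  hence Gz: "Gl j z" using IH[OF PPi[of S]] unfolding z_def by simp
  let ?q = "prod_list (map (\<lambda>b. vq ^ a - vq ^ b) S)"
  have GW: "Gl j ((Pi i S - emb ?q) * x)"
    using W[of j i a x S] Gy i j unfolding y_def by (simp add: left_diff_distrib)
  have "emb ?q * x = z - (Pi i S - emb ?q) * x" by (simp add: z_def left_diff_distrib)
  hence "Gl j (emb ?q * x)" using Gl_diff Gz GW by simp
  hence "Gl j (emb (inverse ?q) * (emb ?q * x))" by (rule Gl_emb)
  moreover have "?q \<noteq> 0" using Cons.prems(1) vq_pow_inj by (auto simp: prod_list_zero_iff) (metis vq_pow_inj)
  ultimately show ?case by (simp add: emb_mult_assoc)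
qed

end

context TT begin

lemma base:
  assumes j: "j \<in> {1..n}" and hx: "\<forall>i\<in>{1..n}. \<exists>a. K i * x = emb (vq ^ a) * x"
  shows "Gl j x"
proof -
  obtain m where m: "\<forall>i\<in>{1..n}. K i * x = emb (vq ^ m i) * x" using hx by metis
  have wx: "wt (\<lambda>i. int (m i)) x" using m by (simp add: wt_def)
  define g where "g = gam (\<lambda>i. int (m i))"
  have ex: "e * x = emb g * x" unfolding g_def by (rule e_eig[OF wx])
  have L: "K j * (e * x) = emb (g * vq ^ m j) * x"
    using m j by (simp add: ex emb_commx[of "K j"] emb_mult_assoc)
  have R: "emb (vq ^ omega r j) * (e * x) = emb (g * vq ^ omega r j) * x"
    by (simp add: ex emb_mult_assoc mult.commute)
  show ?thesis
  proof (cases "m j = omega r j")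
    case True then show ?thesis unfolding Gl_def L R by simp
  next
    case False
    show ?thesis
    proof (cases "\<exists>i\<in>{1..r}. m i = 0")
      case True
      then obtain i where i: "i \<in> {1..r}" "m i = 0" by blast
      have "g = 0" unfolding g_def gam_def prod_list_zero_iff
        using i nr by (auto simp: omega_def image_iff intro!: bexI[of _ i])
      then show ?thesis unfolding Gl_def L R by simp
    next
      case False2: False
      have le: "\<forall>i\<in>{1..n}. omega r i \<le> m i" using False2 by (auto simp: omega_def Suc_le_eq)
      have "omega r j < m j" using le j False by (auto simp: le_neq_trans)
      hence "sum (omega r) {1..n} < sum m {1..n}"
        using le j by (intro sum_strict_mono_ex1) auto
      hence gt: "sum m {1..n} > r" using sum_omega[of r n] nr by simp
      have "prod_list (map K [1..<n+1]) * x = emb (prod_list (map (\<lambda>i. vq ^ m i) [1..<n+1])) * x"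
        by (rule prod_eig) (use m in auto)
      also have "\<dots> = emb (vq ^ sum m {1..n}) * x"
        by (simp only: prod_vq_pow interv_sum_list_conv_sum_set_nat set_upt)
           (simp add: atLeastLessThanSuc_atLeastAtMost)
      finally have "emb (vq ^ sum m {1..n}) * x - emb (vq ^ r) * x = 0" using Kprod by simp
      hence "emb (vq ^ sum m {1..n} - vq ^ r) * x = 0" by (simp add: emb_diff left_diff_distrib)
      moreover have "vq ^ sum m {1..n} - vq ^ r \<noteq> 0" using gt vq_pow_inj by fastforce
      ultimately have "x = 0" using emb_cancel by blast
      then show ?thesis by (simp add: Gl_0)
    qed
  qed
qed

lemma outer:
  "k \<le> n \<Longrightarrow> j \<in> {1..n} \<Longrightarrow>
   \<forall>x. (\<forall>l. k < l \<and> l \<le> n \<longrightarrow> (\<exists>a. K l * x = emb (vq ^ a) * x)) \<longrightarrow> Gl j x"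
proof (induction k)
  case 0 then show ?case using base by auto
next
  case (Suc k)
  show ?case
  proof (intro allI impI)
    fix x assume hx: "\<forall>l. Suc k < l \<and> l \<le> n \<longrightarrow> (\<exists>a. K l * x = emb (vq ^ a) * x)"
    let ?P = "\<lambda>y. \<forall>l. Suc k < l \<and> l \<le> n \<longrightarrow> (\<exists>a. K l * y = emb (vq ^ a) * y)"
    have i: "Suc k \<in> {1..n}" using Suc.prems by auto
    show "Gl j x"
    proof (rule inner[where P = ?P, OF i Suc.prems(2)])
      fix y c assume Py: "?P y"
      show "?P (K (Suc k) * y - emb c * y)"
      proof (intro allI impI)
        fix l assume l: "Suc k < l \<and> l \<le> n"
        then obtain a where a: "K l * y = emb (vq ^ a) * y" using Py by blast
        have l1: "l \<in> {1..n}" using l by auto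
        have kk: "K l * K (Suc k) = K (Suc k) * K l" using KK[OF l1 i] .
        have "K l * (K (Suc k) * y - emb c * y) = K (Suc k) * (K l * y) - emb c * (K l * y)"
          by (simp only: right_diff_distrib mult.assoc[symmetric] kk emb_comm[of c "K l", symmetric])
        also have "\<dots> = K (Suc k) * (emb (vq ^ a) * y) - emb c * (emb (vq ^ a) * y)"
          by (simp only: a)
        also have "\<dots> = emb (vq ^ a) * (K (Suc k) * y - emb c * y)"
          by (simp only: right_diff_distrib emb_commx[of "K (Suc k)"] emb_mult_assoc mult.commute)
        finally show "\<exists>a. K l * (K (Suc k) * y - emb c * y) = emb (vq ^ a) * (K (Suc k) * y - emb c * y)"
          by blast
      qed
    next
      fix y a assume Py: "?P y" and ya: "K (Suc k) * y = emb (vq ^ a) * y"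
      have "\<forall>l. k < l \<and> l \<le> n \<longrightarrow> (\<exists>a. K l * y = emb (vq ^ a) * y)"
      proof (intro allI impI)
        fix l assume "k < l \<and> l \<le> n"
        then show "\<exists>a. K l * y = emb (vq ^ a) * y"
          using Py ya by (cases "l = Suc k") auto
      qed
      then show "Gl j y" using Suc.IH Suc.prems by simp
    next
      show "distinct [0..<r+1]" by simp
    next
      show "?P x" using hx .
    next
      show "Pi (Suc k) [0..<r+1] * x = 0" using Kpoly[OF i] by simp
    qed
  qed
qed

lemma e_wt: "wt (\<lambda>i. int (omega r i)) e"
  unfolding wt_def
proof
  fix j assume j: "j \<in> {1..n}"
  have "\<forall>x. (\<forall>l. n < l \<and> l \<le> n \<longrightarrow> (\<exists>a. K l * x = emb (vq ^ a) * x)) \<longrightarrow> Gl j x"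
    using outer[of n j] j by simp
  then have "Gl j 1" by auto
  then show "K j * e = emb (vq powi int (omega r j)) * e" by (simp add: Gl_def)
qed

lemma e_id: "wt (\<lambda>i. int (omega r i)) y \<Longrightarrow> e * y = y"
  using e_eig gam_omega by simp

end

context TT begin

lemma pr_ne: "i \<in> {1..n} \<Longrightarrow> pr n i \<noteq> i"
  using n2 by (auto simp: pr_def)

lemma sum_eps: "distinct xs \<Longrightarrow> i \<in> {1..n} \<Longrightarrow>
  sum_list (map (epsp n i) xs) = (if i \<in> set xs then 1 else 0) - (if pr n i \<in> set xs then 1 else 0)"
proof (induction xs)
  case Nil then show ?case by simp
next
  case (Cons a xs)
  then show ?case using pr_ne[OF Cons.prems(2)] by (auto simp: epsp_def)
qed

lemma wt_Es': "wt \<mu> z \<Longrightarrow> distinct xs \<Longrightarrow> set xs \<subseteq> {1..n} \<Longrightarrow>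
   wt (\<lambda>i. \<mu> i + (if i \<in> set xs then 1 else 0) - (if pr n i \<in> set xs then 1 else 0)) (prod_list (map E xs) * z)"
proof -
  assume a: "wt \<mu> z" "distinct xs" "set xs \<subseteq> {1..n}"
  show ?thesis using wt_Es[OF a(1,3)] by (rule wt_cong) (simp add: sum_eps[OF a(2)])
qed

lemma wt_Fs': "wt \<mu> z \<Longrightarrow> distinct xs \<Longrightarrow> set xs \<subseteq> {1..n} \<Longrightarrow>
   wt (\<lambda>i. \<mu> i - (if i \<in> set xs then 1 else 0) + (if pr n i \<in> set xs then 1 else 0)) (prod_list (map F xs) * z)"
proof -
  assume a: "wt \<mu> z" "distinct xs" "set xs \<subseteq> {1..n}"
  show ?thesis using wt_Fs[OF a(1,3)] by (rule wt_cong) (simp add: sum_eps[OF a(2)])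
qed

lemma F_Es: "l \<in> {1..n} \<Longrightarrow> set js \<subseteq> {1..n} \<Longrightarrow> l \<notin> set js \<Longrightarrow>
   F l * prod_list (map E js) = prod_list (map E js) * F l"
proof (induction js)
  case Nil then show ?case by simp
next
  case (Cons j js)
  have "F l * E j = E j * F l" using EF_comm[of j l] Cons.prems by auto
  then have "F l * (E j * prod_list (map E js)) = E j * (F l * prod_list (map E js))"
    by (simp only: mult.assoc[symmetric])
  also have "\<dots> = E j * (prod_list (map E js) * F l)" using Cons by simp
  finally show ?case by (simp add: mult.assoc)
qed

lemma Fs_Es: "set ls \<subseteq> {1..n} \<Longrightarrow> set js \<subseteq> {1..n} \<Longrightarrow> set ls \<inter> set js = {} \<Longrightarrow>
   prod_list (map F ls) * (prod_list (map E js) * z) = prod_list (map E js) * (prod_list (map F ls) * z)"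
proof (induction ls)
  case Nil then show ?case by simp
next
  case (Cons l ls)
  have "prod_list (map F (l # ls)) * (prod_list (map E js) * z)
      = F l * (prod_list (map E js) * (prod_list (map F ls) * z))" using Cons by (simp add: mult.assoc)
  also have "\<dots> = prod_list (map E js) * (F l * (prod_list (map F ls) * z))"
    using F_Es[of l js] Cons.prems by (simp add: mult.assoc[symmetric])
  finally show ?case by (simp add: mult.assoc)
qed

abbreviation "om \<equiv> (\<lambda>i. int (omega r i))"

lemma T1:
  assumes wx: "wt (\<lambda>i. om i + epsp n i n) x"
  shows "k \<le> r - 1 \<Longrightarrow> prod_list (map F [1..<k+1]) * (prod_list (map E (rev [1..<k+1])) * x) = x"
proof (induction k)
  case 0 then show ?case by simp
next
  case (Suc k)
  have k: "k < r - 1" using Suc.prems by simp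
  have w: "wt (\<lambda>i. om i + epsp n i n + (if i \<in> set (rev [1..<k+1]) then 1 else 0) - (if pr n i \<in> set (rev [1..<k+1]) then 1 else 0))
      (prod_list (map E (rev [1..<k+1])) * x)"
    by (rule wt_Es'[OF wx]) (use k nr in auto)
  have kn: "k + 1 \<in> {1..n}" using k nr by auto
  have "F (k+1) * (E (k+1) * (prod_list (map E (rev [1..<k+1])) * x)) = prod_list (map E (rev [1..<k+1])) * x"
    by (rule FE[OF w kn]) (use k nr in \<open>auto simp: sc_def pr_def omega_def epsp_def\<close>)
  then show ?case using Suc by (simp add: mult.assoc)
qed

definition nu :: "nat \<Rightarrow> nat \<Rightarrow> int" where
  "nu k i = (if (2 \<le> i \<and> i \<le> r) \<or> i = k then 1 else 0)"

lemma T2: "r + 1 \<le> k \<Longrightarrow> k \<le> n \<Longrightarrow> wt (nu k) z \<Longrightarrow>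
  prod_list (map F (rev [r+1..<k])) * (prod_list (map E [r+1..<k]) * z) = z"
proof (induction k arbitrary: z rule: nat_induct_at_least)
  case base then show ?case by simp
next
  case (Suc k)
  have kn: "k \<in> {1..n}" using Suc by auto
  have w: "wt (\<lambda>i. nu (Suc k) i + epsp n i k) (E k * z)" using wt_E[OF Suc.prems(2) kn] .
  have w2: "wt (nu k) (E k * z)"
    by (rule wt_cong[OF w]) (use Suc in \<open>auto simp: nu_def epsp_def pr_def\<close>)
  have "prod_list (map F (rev [r+1..<Suc k])) * (prod_list (map E [r+1..<Suc k]) * z)
     = F k * (prod_list (map F (rev [r+1..<k])) * (prod_list (map E [r+1..<k]) * (E k * z)))"
    using Suc by (simp add: mult.assoc)
  also have "\<dots> = F k * (E k * z)" using Suc w2 by simp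
  also have "\<dots> = z" by (rule FE[OF Suc.prems(2) kn]) (use Suc in \<open>auto simp: nu_def sc_def\<close>)
  finally show ?case .
qed

definition Qw :: "nat \<Rightarrow> nat \<Rightarrow> int" where
  "Qw k i = (if (1 \<le> i \<and> i \<le> k) \<or> (k + 2 \<le> i \<and> i \<le> r + 1) then 1 else 0)"

lemma T3: "k \<le> r - 1 \<Longrightarrow> wt (Qw k) z \<Longrightarrow>
  prod_list (map E (rev [1..<k+1])) * (prod_list (map F [1..<k+1]) * z) = z"
proof (induction k arbitrary: z)
  case 0 then show ?case by simp
next
  case (Suc k)
  have k: "k < r - 1" using Suc.prems by simp
  have kn: "k + 1 \<in> {1..n}" using k nr by auto
  have w: "wt (\<lambda>i. Qw (Suc k) i - epsp n i (k+1)) (F (k+1) * z)" using wt_F[OF Suc.prems(2) kn] .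
  have w2: "wt (Qw k) (F (k+1) * z)"
    by (rule wt_cong[OF w]) (use k nr in \<open>auto simp: Qw_def epsp_def pr_def\<close>)
  have "prod_list (map E (rev [1..<Suc k+1])) * (prod_list (map F [1..<Suc k+1]) * z)
     = E (k+1) * (prod_list (map E (rev [1..<k+1])) * (prod_list (map F [1..<k+1]) * (F (k+1) * z)))"
    by (simp add: mult.assoc)
  also have "\<dots> = E (k+1) * (F (k+1) * z)" using Suc.IH[OF _ w2] k by simp
  also have "\<dots> = z" by (rule EFl[OF Suc.prems(2) kn]) (use k nr in \<open>auto simp: Qw_def sc_def\<close>)
  finally show ?case .
qed

definition sg :: "nat \<Rightarrow> int" where
  "sg i = (if (1 \<le> i \<and> i \<le> r - 1) \<or> i = r + 1 then 1 else 0)"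

lemma T4: "r + 1 \<le> k \<Longrightarrow> k \<le> n \<Longrightarrow> wt sg w \<Longrightarrow>
  prod_list (map E [r+1..<k]) * (prod_list (map F (rev [r+1..<k])) * w) = w"
proof (induction k rule: nat_induct_at_least)
  case base then show ?case by simp
next
  case (Suc k)
  have kn: "k \<in> {1..n}" using Suc by auto
  have w: "wt (\<lambda>i. sg i - (if i \<in> set (rev [r+1..<k]) then 1 else 0) + (if pr n i \<in> set (rev [r+1..<k]) then 1 else 0))
      (prod_list (map F (rev [r+1..<k])) * w)"
    by (rule wt_Fs'[OF Suc.prems(2)]) (use Suc in auto)
  have "prod_list (map E [r+1..<Suc k]) * (prod_list (map F (rev [r+1..<Suc k])) * w)
     = prod_list (map E [r+1..<k]) * (E k * (F k * (prod_list (map F (rev [r+1..<k])) * w)))"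
    using Suc by (simp add: mult.assoc)
  also have "E k * (F k * (prod_list (map F (rev [r+1..<k])) * w)) = prod_list (map F (rev [r+1..<k])) * w"
    by (rule EFl[OF w kn]) (use Suc r3 in \<open>auto simp: sg_def sc_def pr_def\<close>)
  finally show ?case using Suc by simp
qed

end

context TT begin

lemma part1: "zeta_rho_inv n r emb F K Ki * zeta_rho n r emb E K Ki = e"
proof -
  define x where "x = E n * e"
  have nn: "n \<in> {1..n}" using nr by auto
  have wx: "wt (\<lambda>i. om i + epsp n i n) x" unfolding x_def by (rule wt_E[OF e_wt nn])
  let ?D = "prod_list (map E (rev [1..<r]))"
  let ?C' = "prod_list (map E [r+1..<n])"
  let ?B' = "prod_list (map F [1..<r])"
  let ?A' = "prod_list (map F (rev [r+1..<n]))"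
  have wD: "wt (\<lambda>i. om i + epsp n i n + (if i \<in> set (rev [1..<r]) then 1 else 0) - (if pr n i \<in> set (rev [1..<r]) then 1 else 0)) (?D * x)"
    by (rule wt_Es'[OF wx]) (use nr in auto)
  have wCD: "wt (\<lambda>i. om i + epsp n i n + (if i \<in> set (rev [1..<r]) then 1 else 0) - (if pr n i \<in> set (rev [1..<r]) then 1 else 0)
       + (if i \<in> set [r+1..<n] then 1 else 0) - (if pr n i \<in> set [r+1..<n] then 1 else 0)) (?C' * (?D * x))"
    by (rule wt_Es'[OF wD]) auto
  have rn: "r \<in> {1..n}" using nr r3 by auto
  have wy: "wt (\<lambda>i. om i + epsp n i n + (if i \<in> set (rev [1..<r]) then 1 else 0) - (if pr n i \<in> set (rev [1..<r]) then 1 else 0)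
       + (if i \<in> set [r+1..<n] then 1 else 0) - (if pr n i \<in> set [r+1..<n] then 1 else 0) + epsp n i r) (E r * (?C' * (?D * x)))"
    by (rule wt_E[OF wCD rn])
  have wy2: "wt om (E r * (?C' * (?D * x)))"
    by (rule wt_cong[OF wy]) (use nr r3 in \<open>auto simp: omega_def epsp_def pr_def\<close>)
  have Ceq: "prod_list (map E [r..<n]) = E r * ?C'" using nr by (simp add: upt_conv_Cons)
  have Beq: "prod_list (map F [1..<r+1]) = ?B' * F r" using r3 by simp
  have Aeq: "prod_list (map F (rev [r+1..<n+1])) = F n * ?A'" using nr by simp
  have s1: "F r * (E r * (?C' * (?D * x))) = ?C' * (?D * x)"
    by (rule FE[OF wCD rn]) (use nr r3 in \<open>auto simp: omega_def epsp_def pr_def sc_def\<close>)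
  have s2: "?B' * (?C' * (?D * x)) = ?C' * (?B' * (?D * x))"
    by (rule Fs_Es) (use nr in auto)
  have s3: "?B' * (?D * x) = x" using T1[OF wx, of "r - 1"] r3 by (simp add: Suc_diff_Suc)
  have wnu: "wt (nu n) x"
    by (rule wt_cong[OF wx]) (use nr r3 in \<open>auto simp: nu_def omega_def epsp_def pr_def\<close>)
  have s4: "?A' * (?C' * x) = x" using T2[of n x] nr wnu by simp
  have s5: "F n * x = e" unfolding x_def
    by (rule FE[OF e_wt nn]) (use nr r3 in \<open>auto simp: omega_def sc_def\<close>)
  have "zeta_rho_inv n r emb F K Ki * zeta_rho n r emb E K Ki
      = prod_list (map F (rev [r+1..<n+1])) * (prod_list (map F [1..<r+1]) *
          (e * (prod_list (map E [r..<n]) * (?D * x))))"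
    unfolding zeta_rho_inv_def zeta_rho_def x_def e_def[symmetric] by (simp add: mult.assoc)
  also have "\<dots> = F n * (?A' * (?B' * (F r * (E r * (?C' * (?D * x))))))"
    unfolding Ceq Beq Aeq using e_id[OF wy2] by (simp add: mult.assoc)
  also have "\<dots> = e" unfolding s1 s2 s3 s4 s5 ..
  finally show ?thesis .
qed

end

context TT begin

lemma part2: "zeta_rho n r emb E K Ki * zeta_rho_inv n r emb F K Ki = e"
proof -
  have nn: "n \<in> {1..n}" using nr by auto
  have rn: "r \<in> {1..n}" using nr r3 by auto
  let ?D = "prod_list (map E (rev [1..<r]))"
  let ?C' = "prod_list (map E [r+1..<n])"
  let ?B = "prod_list (map F [1..<r+1])"
  let ?B' = "prod_list (map F [1..<r])"
  let ?A' = "prod_list (map F (rev [r+1..<n]))"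
  let ?A = "prod_list (map F (rev [r+1..<n+1]))"
  have wB: "wt (\<lambda>i. om i - (if i \<in> set [1..<r+1] then 1 else 0) + (if pr n i \<in> set [1..<r+1] then 1 else 0)) (?B * e)"
    by (rule wt_Fs'[OF e_wt]) (use nr in auto)
  have wA': "wt (\<lambda>i. om i - (if i \<in> set [1..<r+1] then 1 else 0) + (if pr n i \<in> set [1..<r+1] then 1 else 0)
     - (if i \<in> set (rev [r+1..<n]) then 1 else 0) + (if pr n i \<in> set (rev [r+1..<n]) then 1 else 0)) (?A' * (?B * e))"
    by (rule wt_Fs'[OF wB]) (use nr in auto)
  have wA: "wt (\<lambda>i. om i - (if i \<in> set [1..<r+1] then 1 else 0) + (if pr n i \<in> set [1..<r+1] then 1 else 0)
     - (if i \<in> set (rev [r+1..<n]) then 1 else 0) + (if pr n i \<in> set (rev [r+1..<n]) then 1 else 0) - epsp n i n)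
     (F n * (?A' * (?B * e)))"
    by (rule wt_F[OF wA' nn])
  have wA2: "wt om (F n * (?A' * (?B * e)))"
    by (rule wt_cong[OF wA]) (use nr r3 in \<open>auto simp: omega_def epsp_def pr_def\<close>)
  have Aeq: "?A = F n * ?A'" using nr by simp
  have Beq: "?B = ?B' * F r" using r3 by simp
  have Ceq: "prod_list (map E [r..<n]) = E r * ?C'" using nr by (simp add: upt_conv_Cons)
  have s1: "E n * (F n * (?A' * (?B * e))) = ?A' * (?B * e)"
    by (rule EFl[OF wA' nn]) (use nr r3 in \<open>auto simp: omega_def sc_def pr_def\<close>)
  have s2: "?D * (?A' * (?B * e)) = ?A' * (?D * (?B * e))"
    by (rule Fs_Es[symmetric]) (use nr in auto)
  have wFr: "wt (\<lambda>i. om i - epsp n i r) (F r * e)" by (rule wt_F[OF e_wt rn])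
  have wQ: "wt (Qw (r - 1)) (F r * e)"
    by (rule wt_cong[OF wFr]) (use nr r3 in \<open>auto simp: omega_def epsp_def pr_def Qw_def\<close>)
  have s3: "?D * (?B' * (F r * e)) = F r * e" using T3[OF _ wQ] r3 by (simp add: Suc_diff_Suc)
  have wS: "wt sg (F r * e)"
    by (rule wt_cong[OF wFr]) (use nr r3 in \<open>auto simp: omega_def epsp_def pr_def sg_def\<close>)
  have s4: "?C' * (?A' * (F r * e)) = F r * e" using T4[of n "F r * e"] nr wS by simp
  have s5: "E r * (F r * e) = e"
    by (rule EFl[OF e_wt rn]) (use nr r3 in \<open>auto simp: omega_def sc_def\<close>)
  have "zeta_rho n r emb E K Ki * zeta_rho_inv n r emb F K Ki
      = prod_list (map E [r..<n]) * (?D * (E n * (e * (?A * (?B * e)))))"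
    unfolding zeta_rho_inv_def zeta_rho_def e_def[symmetric] by (simp add: mult.assoc)
  also have "\<dots> = E r * (?C' * (?D * (E n * (F n * (?A' * (?B * e))))))"
    unfolding Ceq Aeq using e_id[OF wA2] by (simp add: mult.assoc)
  also have "\<dots> = E r * (?C' * (?D * (?A' * (?B * e))))" by (simp only: s1)
  also have "\<dots> = E r * (?C' * (?A' * (?D * (?B * e))))" by (simp only: s2)
  also have "\<dots> = E r * (?C' * (?A' * (?D * (?B' * (F r * e)))))"
    by (simp only: Beq mult.assoc)
  also have "\<dots> = e" unfolding s3 s4 s5 ..
  finally show ?thesis .
qed

end

theorem lemma2p3p5:
  fixes n r :: nat and emb :: "qv \<Rightarrow> 'a::ring_1"
    and E F K Ki :: "nat \<Rightarrow> 'a"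
  assumes "r \<ge> 3" and "n > r" and "T_rel n r emb E F K Ki"
  shows "zeta_rho_inv n r emb F K Ki * zeta_rho n r emb E K Ki = one_lam n emb K Ki (omega r) \<and>
         zeta_rho n r emb E K Ki * zeta_rho_inv n r emb F K Ki = one_lam n emb K Ki (omega r)"
proof -
  interpret TT n r emb E F K Ki using assms by unfold_locales
  show ?thesis using part1 part2 unfolding e_def by simp
qed

end
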